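(* For all integers $k\ge2$, $$[t^{2k-3}]\frac{(1-t^2)^{k-2}(1+t)^2}{1+t+t^2}=2(-\sqrt3)^{k-3}\sin\!\Bigl(\frac{(k-4)\pi}{6}\Bigr).$$
   Context: $[t^m]F(t)$ denotes the coefficient of $t^m$ in the formal power series $F(t)$. *)

theory Defs
  imports "HOL-Analysis.Analysis" "HOL-Computational_Algebra.Formal_Power_Series"
begin

end

theory Submission
  imports Defs
begin

definition dd :: "nat \<Rightarrow> real" where
  "dd m = (if m mod 3 = 0 then 1 else if m mod 3 = 1 then -1 else 0)"

definition DD :: "real fps" where "DD = Abs_fps dd"

lemma dd3: "dd (m+3) = dd m"
  by (simp add: dd_def)

lemma dd_rec0: "dd (j+2) + dd (j+1) + dd j = 0"
proof (induction j)
  case 0 then show ?case by (simp add: dd_def)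
next
  case (Suc j)
  have "dd (Suc j + 2) = dd j" using dd3[of j] by (simp add: numeral_3_eq_3)
  then show ?case using Suc by simp
qed

lemma dd_rec: "m \<ge> 2 \<Longrightarrow> dd m + dd (m-1) + dd (m-2) = 0"
proof -
  assume "m \<ge> 2"
  then obtain j where "m = j + 2" by (metis le_add_diff_inverse2)
  then show ?thesis using dd_rec0[of j] by simp
qed

lemma dd_per: "m \<ge> 3 \<Longrightarrow> dd (m-3) = dd m"
proof -
  assume "m \<ge> 3"
  then obtain j where "m = j + 3" by (metis le_add_diff_inverse2)
  then show ?thesis using dd3[of j] by simp
qed

lemma pD: "(1 + fps_X + fps_X^2) * DD = (1::real fps)"
proof (rule fps_ext)
  fix m
  have "fps_nth ((1 + fps_X + fps_X^2) * DD) m = fps_nth DD m + fps_nth (fps_X * DD) m + fps_nth (fps_X^2 * DD) m"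
    by (simp only: distrib_right fps_add_nth mult_1_left)
  also have "\<dots> = dd m + (if m = 0 then 0 else dd (m-1)) + (if m < 2 then 0 else dd (m-2))"
    by (simp only: fps_X_mult_nth fps_X_power_mult_nth DD_def fps_nth_Abs_fps)
  also have "\<dots> = fps_nth (1::real fps) m"
  proof -
    consider "m = 0" | "m = 1" | "m \<ge> 2" by linarith
    then show ?thesis
    proof cases
      case 1 then show ?thesis by (simp add: dd_def)
    next
      case 2 then show ?thesis by (simp add: dd_def)
    next
      case 3 then show ?thesis using dd_rec[of m] by simp
    qed
  qed
  finally show "fps_nth ((1 + fps_X + fps_X^2) * DD) m = fps_nth (1::real fps) m" .
qed

lemma div_p: "(A::real fps) / (1 + fps_X + fps_X^2) = A * DD"
proof -
  have "inverse (1 + fps_X + fps_X^2 :: real fps) = DD" by (rule fps_inverse_unique[OF pD])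
  moreover have "A / (1 + fps_X + fps_X^2) = A * inverse (1 + fps_X + fps_X^2 :: real fps)"
    by (rule fps_divide_unit) simp
  ultimately show ?thesis by simp
qed

fun ab :: "nat \<Rightarrow> real \<times> real" where
  "ab 0 = (0, 1)"
| "ab (Suc n) = (2 * fst (ab n) - snd (ab n), fst (ab n) + snd (ab n))"

definition cc :: "nat \<Rightarrow> nat \<Rightarrow> real" where
  "cc n m = fps_nth ((1 - fps_X^2) ^ n * (1 + fps_X)^2 * DD) m"

lemma cc_main: "m \<ge> 2*n+1 \<Longrightarrow> cc n m = fst (ab n) * dd m + snd (ab n) * dd (m-1)"
proof (induction n arbitrary: m)
  case 0
  have "(1 + fps_X)^2 * DD = (1 + fps_X + fps_X^2) * DD + fps_X * (DD :: real fps)"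
    by (simp add: power2_eq_square algebra_simps)
  also have "\<dots> = 1 + fps_X * DD" by (simp add: pD)
  finally have "cc 0 m = fps_nth (1 + fps_X * DD) m" by (simp add: cc_def)
  then show ?case using 0 by (simp add: DD_def)
next
  case (Suc n)
  define E where "E = (1 - fps_X^2) ^ n * (1 + fps_X)^2 * (DD :: real fps)"
  have "cc (Suc n) m = fps_nth ((1 - fps_X^2) * E) m" by (simp add: cc_def E_def algebra_simps)
  also have "\<dots> = fps_nth E m - fps_nth (fps_X^2 * E) m" by (simp add: algebra_simps)
  also have "\<dots> = cc n m - cc n (m-2)" using Suc.prems
    by (simp add: fps_X_power_mult_nth cc_def E_def)
  also have "\<dots> = fst (ab n) * dd m + snd (ab n) * dd (m-1)
      - (fst (ab n) * dd (m-2) + snd (ab n) * dd (m-2-1))"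
    using Suc.prems Suc.IH[of m] Suc.IH[of "m-2"] by simp
  also have "\<dots> = fst (ab (Suc n)) * dd m + snd (ab (Suc n)) * dd (m-1)"
  proof -
    have h1: "dd (m-2) = - dd m - dd (m-1)" using dd_rec[of m] Suc.prems by simp
    have h2: "dd (m-2-1) = dd m"
    proof -
      have "m-2-1 = m-3" by simp
      then show ?thesis using dd_per[of m] Suc.prems by simp
    qed
    show ?thesis unfolding h2 h1 by (simp add: algebra_simps)
  qed
  finally show ?case .
qed

definition aa :: "nat \<Rightarrow> real" where "aa n = cc n (2*n+1)"

lemma aa_form: "aa n = fst (ab n) * dd (2*n+1) + snd (ab n) * dd (2*n)"
  unfolding aa_def using cc_main[of n "2*n+1"] by simp

lemma aa_rec: "aa (n+2) = -3 * aa (n+1) - 3 * aa n"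
proof -
  have e: "fst (ab (n+2)) = 3 * fst (ab n) - 3 * snd (ab n)" "snd (ab (n+2)) = 3 * fst (ab n)"
      "fst (ab (n+1)) = 2 * fst (ab n) - snd (ab n)" "snd (ab (n+1)) = fst (ab n) + snd (ab n)"
    by (simp_all add: numeral_2_eq_2)
  consider "n mod 3 = 0" | "n mod 3 = 1" | "n mod 3 = 2" by linarith
  then show ?thesis
  proof cases
    case 1
    have "(2*n) mod 3 = 0" "(2*n+1) mod 3 = 1" "(2*(n+1)) mod 3 = 2" "(2*(n+1)+1) mod 3 = 0"
       "(2*(n+2)) mod 3 = 1" "(2*(n+2)+1) mod 3 = 2" using 1 by presburger+
    then have "dd (2*n) = 1" "dd (2*n+1) = -1" "dd (2*(n+1)) = 0" "dd (2*(n+1)+1) = 1"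
       "dd (2*(n+2)) = -1" "dd (2*(n+2)+1) = 0" unfolding dd_def by simp_all
    then show ?thesis unfolding aa_form e by (simp add: algebra_simps)
  next
    case 2
    have "(2*n) mod 3 = 2" "(2*n+1) mod 3 = 0" "(2*(n+1)) mod 3 = 1" "(2*(n+1)+1) mod 3 = 2"
       "(2*(n+2)) mod 3 = 0" "(2*(n+2)+1) mod 3 = 1" using 2 by presburger+
    then have "dd (2*n) = 0" "dd (2*n+1) = 1" "dd (2*(n+1)) = -1" "dd (2*(n+1)+1) = 0"
       "dd (2*(n+2)) = 1" "dd (2*(n+2)+1) = -1" unfolding dd_def by simp_all
    then show ?thesis unfolding aa_form e by (simp add: algebra_simps)
  next
    case 3
    have "(2*n) mod 3 = 1" "(2*n+1) mod 3 = 2" "(2*(n+1)) mod 3 = 0" "(2*(n+1)+1) mod 3 = 1"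
       "(2*(n+2)) mod 3 = 2" "(2*(n+2)+1) mod 3 = 0" using 3 by presburger+
    then have "dd (2*n) = -1" "dd (2*n+1) = 0" "dd (2*(n+1)) = 1" "dd (2*(n+1)+1) = -1"
       "dd (2*(n+2)) = 0" "dd (2*(n+2)+1) = 1" unfolding dd_def by simp_all
    then show ?thesis unfolding aa_form e by (simp add: algebra_simps)
  qed
qed

definition bb :: "nat \<Rightarrow> real" where
  "bb n = 2 * (- sqrt 3) powi (int n - 1) * sin ((real n - 2) * pi / 6)"

lemma bb_rec: "bb (n+2) = -3 * bb (n+1) - 3 * bb n"
proof -
  define s where "s = sqrt 3"
  define P where "P = (- s) powi (int n - 1)"
  define th where "th = (real n - 2) * pi / 6"
  have s2: "s * s = 3" by (simp add: s_def)
  have s0: "- s \<noteq> 0" by (simp add: s_def)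
  have p1: "(- s) powi (int (n+1) - 1) = P * (- s)"
    unfolding P_def using power_int_add[of "-s" "int n - 1" 1] s0 by simp
  have p2: "(- s) powi (int (n+2) - 1) = P * 3"
    unfolding P_def using power_int_add[of "-s" "int n - 1" 2] s0 s2
    by (simp add: power2_eq_square)
  have t1: "(real (n+1) - 2) * pi / 6 = th + pi/6" by (simp add: th_def field_simps)
  have t2: "(real (n+2) - 2) * pi / 6 = th + pi/3" by (simp add: th_def field_simps)
  have b2: "bb (n+2) = 2 * P * 3 * sin (th + pi/3)"
    unfolding bb_def s_def[symmetric] p2 t2 by simp
  have b1: "bb (n+1) = 2 * P * (- s) * sin (th + pi/6)"
    unfolding bb_def s_def[symmetric] p1 t1 by simp
  have b0: "bb n = 2 * P * sin th"
    unfolding bb_def by (simp add: P_def s_def th_def)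
  have "bb (n+2) + 3 * bb (n+1) + 3 * bb n =
      2 * P * (3 * sin (th + pi/3) - 3 * s * sin (th + pi/6) + 3 * sin th)"
    unfolding b0 b1 b2 by (simp add: algebra_simps)
  also have "3 * sin (th + pi/3) - 3 * s * sin (th + pi/6) + 3 * sin th = 0"
    by (simp add: sin_add algebra_simps cos_60 sin_60 cos_30 sin_30 s_def)
  finally show ?thesis by simp
qed

lemma bb0: "bb 0 = 1"
proof -
  have "(- sqrt 3) powi (int 0 - 1) = - 1 / sqrt 3" by (simp add: power_int_minus inverse_eq_divide)
  moreover have "sin ((real 0 - 2) * pi / 6) = - (sqrt 3 / 2)"
    using sin_60 sin_minus[of "pi/3"] by simp
  ultimately show ?thesis unfolding bb_def by simp
qed

lemma bb1: "bb 1 = -1"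
proof -
  have "sin ((real 1 - 2) * pi / 6) = - (1/2)"
    using sin_30 sin_minus[of "pi/6"] by simp
  then show ?thesis unfolding bb_def by simp
qed

lemma aa0: "aa 0 = 1"
  unfolding aa_form by (simp add: dd_def)

lemma aa1: "aa 1 = -1"
  unfolding aa_form by (simp add: dd_def)

lemma aa_bb: "aa n = bb n"
proof (induction n rule: less_induct)
  case (less n)
  consider "n = 0" | "n = 1" | "n \<ge> 2" by linarith
  then show ?case
  proof cases
    case 1
    then show ?thesis using aa0 bb0 by simp
  next
    case 2
    then show ?thesis using aa1 bb1 by simp
  next
    case 3
    then obtain m where m: "n = m + 2" by (metis le_add_diff_inverse2)
    then have "aa m = bb m" "aa (m+1) = bb (m+1)" using less by auto
    then show ?thesis using m aa_rec[of m] bb_rec[of m] by simp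
  qed
qed

theorem lemma7:
  fixes k :: nat
  assumes "k \<ge> 2"
  shows "fps_nth ((1 - fps_X\<^sup>2) ^ (k - 2) * (1 + fps_X)\<^sup>2 / (1 + fps_X + fps_X\<^sup>2) :: real fps) (2 * k - 3)
         = 2 * (- sqrt 3) powi (int k - 3) * sin ((real k - 4) * pi / 6)"
proof -
  obtain n where k: "k = n + 2" using assms by (metis le_add_diff_inverse2)
  have "2 * k - 3 = 2*n+1" using k by simp
  then have "fps_nth ((1 - fps_X\<^sup>2) ^ (k - 2) * (1 + fps_X)\<^sup>2 / (1 + fps_X + fps_X\<^sup>2) :: real fps) (2 * k - 3)
      = aa n" by (simp add: div_p aa_def cc_def k)
  also have "\<dots> = bb n" by (rule aa_bb)
  also have "\<dots> = 2 * (- sqrt 3) powi (int k - 3) * sin ((real k - 4) * pi / 6)"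
  proof -
    have e1: "int k - 3 = int n - 1" and e2: "real k - 4 = real n - 2" using k by auto
    show ?thesis unfolding bb_def e1 e2 by (rule refl)
  qed
  finally show ?thesis .
qed

end
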